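(* Let $0<p<\infty$ and let $E$ be a normed space (over $\mathbb{R}$ or $\mathbb{C}$) with $\dim E=n$. Then the identity operator $id_E$ satisfies $$\pi_p(id_E)\le n^{\max\{\frac1p,\frac12\}}.$$
   Context: For $0<p<\infty$ and a bounded linear operator $u:E\to F$ between normed spaces, $\pi_p(u)$ denotes the infimum of all constants $C\ge 0$ such that $\left(\sum_{k=1}^{N}\|u(x_k)\|^p\right)^{1/p}\le C\sup_{\varphi\in B_{E^*}}\left(\sum_{k=1}^{N}|\varphi(x_k)|^p\right)^{1/p}$ for all $N\in\mathbb{N}$ and all $x_1,\dots,x_N\in E$. Here $B_{E^*}$ is the closed unit ball of the topological dual $E^*$ (this extends the usual absolutely $p$-summing norm to all $p>0$). *)

theory Defs
  imports "HOL-Analysis.Analysis"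
begin

definition normed_sp :: "('k::real_normed_field \<Rightarrow> 'v::ab_group_add \<Rightarrow> 'v) \<Rightarrow> ('v \<Rightarrow> real) \<Rightarrow> bool" where
  "normed_sp s N \<longleftrightarrow> Vector_Spaces.vector_space s
     \<and> (\<forall>x. N x = 0 \<longleftrightarrow> x = 0)
     \<and> (\<forall>c x. N (s c x) = norm c * N x)
     \<and> (\<forall>x y. N (x + y) \<le> N x + N y)"

definition has_dim :: "('k::field \<Rightarrow> 'v::ab_group_add \<Rightarrow> 'v) \<Rightarrow> nat \<Rightarrow> bool" where
  "has_dim s n \<longleftrightarrow> (\<exists>B. finite B \<and> module.span s B = UNIV) \<and> vector_space.dim s UNIV = n"

text \<open>Closed unit ball of the (topological) dual: linear functionals of norm at most 1.
  (In a finite-dimensional space every linear functional is bounded.)\<close>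
definition dual_ball :: "('k::real_normed_field \<Rightarrow> 'v::ab_group_add \<Rightarrow> 'v) \<Rightarrow> ('v \<Rightarrow> real) \<Rightarrow> ('v \<Rightarrow> 'k) set" where
  "dual_ball s N = {\<phi>. Vector_Spaces.linear s (*) \<phi> \<and> (\<forall>x. norm (\<phi> x) \<le> N x)}"

definition pi_summing :: "real \<Rightarrow> ('k::real_normed_field \<Rightarrow> 'v::ab_group_add \<Rightarrow> 'v) \<Rightarrow> ('v \<Rightarrow> real)
    \<Rightarrow> ('w \<Rightarrow> real) \<Rightarrow> ('v \<Rightarrow> 'w) \<Rightarrow> real" where
  "pi_summing p s NE NF u = Inf {C. C \<ge> 0 \<and> (\<forall>(M::nat) (x::nat \<Rightarrow> 'v).
      (\<Sum>k\<in>{1..M}. NF (u (x k)) powr p) powr (1/p)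
        \<le> C * (SUP \<phi>\<in>dual_ball s NE. (\<Sum>k\<in>{1..M}. norm (\<phi> (x k)) powr p) powr (1/p)))}"

end

theory Submission
  imports Defs
begin

definition ipc :: "nat \<Rightarrow> (nat \<Rightarrow> complex) \<Rightarrow> (nat \<Rightarrow> complex) \<Rightarrow> complex" where
  "ipc M u v = (\<Sum>l\<in>{1..M}. u l * cnj (v l))"

lemma ipc_sum_left:
  "ipc M (\<lambda>l. \<Sum>i\<in>I. c i * w i l) v = (\<Sum>i\<in>I. c i * ipc M (w i) v)"
  unfolding ipc_def by (simp add: sum_distrib_left sum_distrib_right mult.assoc sum.swap[of _ I])

lemma ipc_sum_right:
  "ipc M v (\<lambda>l. \<Sum>i\<in>I. c i * w i l) = (\<Sum>i\<in>I. cnj (c i) * ipc M v (w i))"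
  unfolding ipc_def by (simp add: sum_distrib_left sum_distrib_right mult.assoc mult.left_commute sum.swap[of _ I])

lemma ipc_self: "ipc M u u = complex_of_real (\<Sum>l\<in>{1..M}. (cmod (u l))\<^sup>2)"
  unfolding ipc_def of_real_sum by (rule sum.cong[OF refl], rule complex_norm_square[symmetric])

lemma ipc_cong: "(\<And>l. l \<in> {1..M} \<Longrightarrow> u l = u' l) \<Longrightarrow> (\<And>l. l \<in> {1..M} \<Longrightarrow> v l = v' l) \<Longrightarrow>
   ipc M u v = ipc M u' v'"
  unfolding ipc_def by (rule sum.cong) auto

definition orthon :: "nat \<Rightarrow> nat \<Rightarrow> (nat \<Rightarrow> nat \<Rightarrow> complex) \<Rightarrow> bool" where
  "orthon M r w \<longleftrightarrow> (\<forall>i<r. \<forall>i'<r. ipc M (w i) (w i') = (if i = i' then 1 else 0))"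

lemma gram_schmidt_c:
  assumes "finite J"
  shows "\<exists>r w \<alpha>. r \<le> card J \<and> orthon M r w \<and>
     (\<forall>j\<in>J. \<forall>l\<in>{1..M}. V j l = (\<Sum>i<r. \<alpha> j i * w i l))"
  using assms
proof (induction J rule: finite_induct)
  case empty
  show ?case by (rule exI[of _ 0]) (auto simp: orthon_def)
next
  case (insert j0 J)
  from insert.IH obtain r w \<alpha> where r: "r \<le> card J" and on: "orthon M r w"
    and rep: "\<forall>j\<in>J. \<forall>l\<in>{1..M}. V j l = (\<Sum>i<r. \<alpha> j i * w i l)" by blast
  define d where "d i = ipc M (V j0) (w i)" for i
  define u where "u l = V j0 l - (\<Sum>i<r. d i * w i l)" for l
  have cardI: "card (insert j0 J) = Suc (card J)" using insert by simp
  have uorth: "ipc M u (w i) = 0" if "i < r" for i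
  proof -
    have "ipc M u (w i) = ipc M (V j0) (w i) - ipc M (\<lambda>l. \<Sum>i<r. d i * w i l) (w i)"
      unfolding u_def ipc_def by (simp add: algebra_simps sum_subtractf)
    also have "ipc M (\<lambda>l. \<Sum>i<r. d i * w i l) (w i) = (\<Sum>i'<r. d i' * ipc M (w i') (w i))"
      by (rule ipc_sum_left)
    also have "\<dots> = (\<Sum>i'<r. if i' = i then d i else 0)"
      using on that by (intro sum.cong) (auto simp: orthon_def)
    also have "\<dots> = d i" using that by simp
    finally show ?thesis by (simp add: d_def)
  qed
  define nu where "nu = (\<Sum>l\<in>{1..M}. (cmod (u l))\<^sup>2)"
  have nu0: "nu \<ge> 0" unfolding nu_def by (simp add: sum_nonneg)
  show ?case
  proof (cases "nu = 0")
    case True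
    have "u l = 0" if "l \<in> {1..M}" for l
    proof -
      have "(cmod (u l))\<^sup>2 = 0"
        using True that sum_nonneg_eq_0_iff[of "{1..M}" "\<lambda>l. (cmod (u l))\<^sup>2"] unfolding nu_def by auto
      then show ?thesis by simp
    qed
    then have "\<forall>l\<in>{1..M}. V j0 l = (\<Sum>i<r. d i * w i l)" by (auto simp: u_def)
    then show ?thesis using r on rep cardI
      by (intro exI[of _ r] exI[of _ w] exI[of _ "\<alpha>(j0 := d)"]) auto
  next
    case False
    then have nup: "nu > 0" using nu0 by simp
    define w' where "w' = w(r := (\<lambda>l. u l / complex_of_real (sqrt nu)))"
    define \<alpha>' where "\<alpha>' = (\<lambda>j i. if i < r then \<alpha> j i else 0)(j0 := (\<lambda>i. if i < r then d i else complex_of_real (sqrt nu)))"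
    have on': "orthon M (Suc r) w'"
      unfolding orthon_def
    proof (intro allI impI)
      fix i i' assume i: "i < Suc r" and i': "i' < Suc r"
      have uu: "ipc M (w' r) (w' r) = 1"
      proof -
        have "ipc M (w' r) (w' r) = ipc M u u / (complex_of_real (sqrt nu) * complex_of_real (sqrt nu))"
          unfolding w'_def ipc_def by (simp add: sum_divide_distrib)
        also have "\<dots> = complex_of_real nu / complex_of_real nu"
          using nup by (simp only: ipc_self nu_def[symmetric] flip: of_real_mult, simp)
        also have "\<dots> = 1" using nup by simp
        finally show ?thesis .
      qed
      have ur: "ipc M (w' r) (w' i) = 0" "ipc M (w' i) (w' r) = 0" if "i < r" for i
      proof -
        have "ipc M (w' r) (w' i) = ipc M u (w i) / complex_of_real (sqrt nu)"
          unfolding w'_def ipc_def using that by (simp add: sum_divide_distrib)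
        then show "ipc M (w' r) (w' i) = 0" using uorth that by simp
        have "ipc M (w' i) (w' r) = cnj (ipc M u (w i)) / complex_of_real (sqrt nu)"
          unfolding w'_def ipc_def using that by (simp add: sum_divide_distrib mult.commute)
        then show "ipc M (w' i) (w' r) = 0" using uorth that by simp
      qed
      show "ipc M (w' i) (w' i') = (if i = i' then 1 else 0)"
      proof (cases "i < r \<and> i' < r")
        case True then show ?thesis using on unfolding orthon_def w'_def by auto
      next
        case False
        then consider "i = r" "i' = r" | "i = r" "i' < r" | "i < r" "i' = r" using i i' by linarith
        then show ?thesis using uu ur by cases auto
      qed
    qed
    have rep': "\<forall>j\<in>insert j0 J. \<forall>l\<in>{1..M}. V j l = (\<Sum>i<Suc r. \<alpha>' j i * w' i l)"
    proof (intro ballI)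
      fix j l assume j: "j \<in> insert j0 J" and l: "l \<in> {1..M}"
      have sw: "(\<Sum>i<r. f i * w' i l) = (\<Sum>i<r. f i * w i l)" for f
        by (rule sum.cong) (auto simp: w'_def)
      show "V j l = (\<Sum>i<Suc r. \<alpha>' j i * w' i l)"
      proof (cases "j = j0")
        case True
        have "(\<Sum>i<Suc r. \<alpha>' j i * w' i l) = (\<Sum>i<r. d i * w i l) + u l"
          using True nup by (simp add: \<alpha>'_def w'_def)
        then show ?thesis using True by (simp add: u_def)
      next
        case False
        then have "j \<in> J" using j by simp
        then have "(\<Sum>i<Suc r. \<alpha>' j i * w' i l) = (\<Sum>i<r. \<alpha> j i * w i l)"
          using False sw[of "\<alpha> j"] by (simp add: \<alpha>'_def)
        then show ?thesis using rep \<open>j \<in> J\<close> l by simp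
      qed
    qed
    show ?thesis using r cardI on' rep'
      by (intro exI[of _ "Suc r"] exI[of _ w'] exI[of _ \<alpha>']) auto
  qed
qed

lemma cs_sum_c:
  "(cmod (\<Sum>i\<in>I. b i * x i))\<^sup>2 \<le> (\<Sum>i\<in>I. (cmod (b i))\<^sup>2) * (\<Sum>i\<in>I. (cmod (x i))\<^sup>2)"
proof -
  have "cmod (\<Sum>i\<in>I. b i * x i) \<le> (\<Sum>i\<in>I. cmod (b i) * cmod (x i))"
    by (rule order_trans[OF norm_sum]) (simp add: norm_mult)
  then have "(cmod (\<Sum>i\<in>I. b i * x i))\<^sup>2 \<le> (\<Sum>i\<in>I. cmod (b i) * cmod (x i))\<^sup>2"
    by (rule power_mono) simp
  also have "\<dots> \<le> (\<Sum>i\<in>I. (cmod (b i))\<^sup>2) * (\<Sum>i\<in>I. (cmod (x i))\<^sup>2)"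
    by (rule Cauchy_Schwarz_ineq_sum)
  finally show ?thesis .
qed

lemma key_c:
  fixes M :: nat and V :: "'j \<Rightarrow> nat \<Rightarrow> complex" and a :: "nat \<Rightarrow> 'j \<Rightarrow> complex"
  assumes J: "finite J" and S: "S \<ge> 0"
    and rows: "\<forall>k\<in>{1..M}. (\<Sum>l\<in>{1..M}. (cmod (\<Sum>j\<in>J. a k j * V j l))\<^sup>2) \<le> S"
  shows "(\<Sum>k\<in>{1..M}. (cmod (\<Sum>j\<in>J. a k j * V j k))\<^sup>2) \<le> real (card J) * S"
proof -
  obtain r w \<alpha> where r: "r \<le> card J" and on: "orthon M r w"
    and rep: "\<forall>j\<in>J. \<forall>l\<in>{1..M}. V j l = (\<Sum>i<r. \<alpha> j i * w i l)"
    using gram_schmidt_c[OF J] by blast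
  define \<beta> where "\<beta> k i = (\<Sum>j\<in>J. a k j * \<alpha> j i)" for k i
  have R: "(\<Sum>j\<in>J. a k j * V j l) = (\<Sum>i<r. \<beta> k i * w i l)" if "l \<in> {1..M}" for k l
  proof -
    have "(\<Sum>j\<in>J. a k j * V j l) = (\<Sum>j\<in>J. a k j * (\<Sum>i<r. \<alpha> j i * w i l))"
      using rep that by (intro sum.cong) auto
    also have "\<dots> = (\<Sum>i<r. \<beta> k i * w i l)"
      unfolding \<beta>_def by (simp add: sum_distrib_left sum_distrib_right mult.assoc sum.swap[of _ J])
    finally show ?thesis .
  qed
  have wn: "(\<Sum>l\<in>{1..M}. (cmod (w i l))\<^sup>2) = 1" if "i < r" for i
  proof -
    have "complex_of_real (\<Sum>l\<in>{1..M}. (cmod (w i l))\<^sup>2) = 1"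
      using on that unfolding orthon_def ipc_self[symmetric] by simp
    then show ?thesis by (metis of_real_eq_1_iff)
  qed
  have pars: "(\<Sum>l\<in>{1..M}. (cmod (\<Sum>j\<in>J. a k j * V j l))\<^sup>2) = (\<Sum>i<r. (cmod (\<beta> k i))\<^sup>2)" for k
  proof -
    let ?R = "\<lambda>l. \<Sum>i<r. \<beta> k i * w i l"
    have "complex_of_real (\<Sum>l\<in>{1..M}. (cmod (\<Sum>j\<in>J. a k j * V j l))\<^sup>2)
        = ipc M (\<lambda>l. \<Sum>j\<in>J. a k j * V j l) (\<lambda>l. \<Sum>j\<in>J. a k j * V j l)"
      by (simp only: ipc_self)
    also have "\<dots> = ipc M ?R ?R" by (rule ipc_cong; rule R)
    also have "\<dots> = (\<Sum>i<r. \<beta> k i * ipc M (w i) ?R)"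
      by (rule ipc_sum_left)
    also have "\<dots> = (\<Sum>i<r. \<beta> k i * (\<Sum>i'<r. cnj (\<beta> k i') * ipc M (w i) (w i')))"
      by (rule sum.cong[OF refl], subst ipc_sum_right, rule refl)
    also have "\<dots> = (\<Sum>i<r. \<beta> k i * cnj (\<beta> k i))"
    proof (rule sum.cong[OF refl])
      fix i assume i: "i \<in> {..<r}"
      have "(\<Sum>i'<r. cnj (\<beta> k i') * ipc M (w i) (w i')) = (\<Sum>i'<r. if i' = i then cnj (\<beta> k i) else 0)"
        using on i unfolding orthon_def by (intro sum.cong) auto
      then show "\<beta> k i * (\<Sum>i'<r. cnj (\<beta> k i') * ipc M (w i) (w i')) = \<beta> k i * cnj (\<beta> k i)"
        using i by simp
    qed
    also have "\<dots> = complex_of_real (\<Sum>i<r. (cmod (\<beta> k i))\<^sup>2)"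
      unfolding of_real_sum by (rule sum.cong[OF refl], rule complex_norm_square[symmetric])
    finally show ?thesis by (simp only: of_real_eq_iff)
  qed
  have "(\<Sum>k\<in>{1..M}. (cmod (\<Sum>j\<in>J. a k j * V j k))\<^sup>2)
      \<le> (\<Sum>k\<in>{1..M}. S * (\<Sum>i<r. (cmod (w i k))\<^sup>2))"
  proof (rule sum_mono)
    fix k assume k: "k \<in> {1..M}"
    have "(cmod (\<Sum>j\<in>J. a k j * V j k))\<^sup>2 = (cmod (\<Sum>i<r. \<beta> k i * w i k))\<^sup>2"
      by (simp only: R[OF k])
    also have "\<dots> \<le> (\<Sum>i<r. (cmod (\<beta> k i))\<^sup>2) * (\<Sum>i<r. (cmod (w i k))\<^sup>2)"
      by (rule cs_sum_c)
    also have "\<dots> \<le> S * (\<Sum>i<r. (cmod (w i k))\<^sup>2)"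
    proof (rule mult_right_mono)
      show "(\<Sum>i<r. (cmod (\<beta> k i))\<^sup>2) \<le> S" using bspec[OF rows k] pars[of k] by linarith
    qed (intro sum_nonneg, simp)
    finally show "(cmod (\<Sum>j\<in>J. a k j * V j k))\<^sup>2 \<le> S * (\<Sum>i<r. (cmod (w i k))\<^sup>2)" .
  qed
  also have "\<dots> = S * (\<Sum>i<r. (\<Sum>k\<in>{1..M}. (cmod (w i k))\<^sup>2))"
    by (simp add: sum_distrib_left) (rule sum.swap)
  also have "\<dots> = S * real r" using wn by simp
  also have "\<dots> \<le> real (card J) * S" using r S by (simp add: mult.commute mult_left_mono)
  finally show ?thesis .
qed

definition lin_on :: "('k::field \<Rightarrow> 'v::ab_group_add \<Rightarrow> 'v) \<Rightarrow> 'v set \<Rightarrow> ('v \<Rightarrow> 'k) \<Rightarrow> bool" where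
  "lin_on s W g \<longleftrightarrow> (\<forall>a\<in>W. \<forall>b\<in>W. g (a + b) = g a + g b) \<and> (\<forall>c. \<forall>a\<in>W. g (s c a) = c * g a)"

lemma hb_ext:
  fixes s :: "real \<Rightarrow> 'v::ab_group_add \<Rightarrow> 'v" and N :: "'v \<Rightarrow> real"
  assumes vs: "vector_space s" and tri: "\<And>x y. N (x + y) \<le> N x + N y"
    and hom: "\<And>c x. N (s c x) = \<bar>c\<bar> * N x"
    and W: "module.subspace s W" and y: "y \<notin> W" and f: "lin_on s W f" and fN: "\<forall>w\<in>W. f w \<le> N w"
    and c1: "\<forall>w\<in>W. f w - N (w - y) \<le> c" and c2: "\<forall>w\<in>W. c \<le> N (w + y) - f w"
  shows "\<exists>g. lin_on s (module.span s (insert y W)) g \<and> (\<forall>w\<in>W. g w = f w) \<and> g y = c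
           \<and> (\<forall>v\<in>module.span s (insert y W). g v \<le> N v)"
proof -
  interpret vs: vector_space s by (rule vs)
  have spW: "vs.span W = W" using W by simp
  have uniq: "k = k'" if a: "v - s k y \<in> W" and b: "v - s k' y \<in> W" for v k k'
  proof (rule ccontr)
    assume neq: "k \<noteq> k'"
    have "(v - s k' y) - (v - s k y) \<in> W" by (rule vs.subspace_diff[OF W b a])
    moreover have "(v - s k' y) - (v - s k y) = s (k - k') y" by (simp add: vs.scale_left_diff_distrib)
    ultimately have "s (k - k') y \<in> W" by simp
    then have "s (1 / (k - k')) (s (k - k') y) \<in> W" by (rule vs.subspace_scale[OF W])
    then have "y \<in> W" using neq by simp
    then show False using y by simp
  qed
  define t where "t v = (SOME k. v - s k y \<in> W)" for v
  have tI: "t v = k" if "v - s k y \<in> W" for v k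
  proof -
    have "v - s (t v) y \<in> W" unfolding t_def by (rule someI[of _ k]) (rule that)
    then show ?thesis using uniq that by blast
  qed
  have spI: "v \<in> vs.span (insert y W) \<longleftrightarrow> (\<exists>k. v - s k y \<in> W)" for v
    using vs.span_insert[of y W] spW by auto
  define g where "g v = f (v - s (t v) y) + t v * c" for v
  have gI: "g v = f (v - s k y) + k * c" if "v - s k y \<in> W" for v k
    using tI[OF that] by (simp add: g_def)
  have W0: "0 \<in> W" using vs.subspace_0[OF W] .
  have fadd: "f (a + b) = f a + f b" if "a \<in> W" "b \<in> W" for a b using f that unfolding lin_on_def by blast
  have fsc: "f (s r a) = r * f a" if "a \<in> W" for r a using f that unfolding lin_on_def by blast
  have f0: "f 0 = 0" using fsc[OF W0, of 0] by simp
  have lin: "lin_on s (vs.span (insert y W)) g"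
    unfolding lin_on_def
  proof (intro conjI ballI allI)
    fix a b assume a: "a \<in> vs.span (insert y W)" and b: "b \<in> vs.span (insert y W)"
    obtain ka kb where ka: "a - s ka y \<in> W" and kb: "b - s kb y \<in> W" using a b spI by blast
    have e: "a + b - s (ka + kb) y = (a - s ka y) + (b - s kb y)"
      by (simp add: vs.scale_left_distrib algebra_simps)
    have "a + b - s (ka + kb) y \<in> W" unfolding e by (rule vs.subspace_add[OF W ka kb])
    then have "g (a + b) = f (a + b - s (ka + kb) y) + (ka + kb) * c" by (rule gI)
    also have "\<dots> = g a + g b" unfolding e fadd[OF ka kb] gI[OF ka] gI[OF kb] by (simp add: algebra_simps)
    finally show "g (a + b) = g a + g b" .
  next
    fix r a assume a: "a \<in> vs.span (insert y W)"
    obtain ka where ka: "a - s ka y \<in> W" using a spI by blast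
    have e: "s r a - s (r * ka) y = s r (a - s ka y)"
      by (simp add: vs.scale_right_diff_distrib)
    have "s r a - s (r * ka) y \<in> W" unfolding e by (rule vs.subspace_scale[OF W ka])
    then have "g (s r a) = f (s r a - s (r * ka) y) + (r * ka) * c" by (rule gI)
    also have "\<dots> = r * g a" unfolding e fsc[OF ka] gI[OF ka] by (simp add: algebra_simps)
    finally show "g (s r a) = r * g a" .
  qed
  have gW: "\<forall>w\<in>W. g w = f w"
  proof
    fix w assume "w \<in> W"
    then have "w - s 0 y \<in> W" by simp
    then show "g w = f w" using gI by fastforce
  qed
  have gy: "g y = c"
  proof -
    have "y - s 1 y \<in> W" using W0 by simp
    then show ?thesis using gI[of y 1] f0 by simp
  qed
  have bound: "g v \<le> N v" if v: "v \<in> vs.span (insert y W)" for v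
  proof -
    obtain k where k: "v - s k y \<in> W" using v spI by blast
    define w where "w = v - s k y"
    have w: "w \<in> W" using k w_def by simp
    have vw: "v = w + s k y" unfolding w_def by simp
    have gv: "g v = f w + k * c" using gI[OF k] w_def by simp
    consider "k > 0" | "k < 0" | "k = 0" by linarith
    then show ?thesis
    proof cases
      case 1
      have w': "s (1/k) w \<in> W" by (rule vs.subspace_scale[OF W w])
      have "c \<le> N (s (1/k) w + y) - f (s (1/k) w)" using c2 w' by blast
      then have "k * c \<le> k * N (s (1/k) w + y) - k * f (s (1/k) w)"
        using 1 by (simp add: right_diff_distrib[symmetric])
      also have "k * f (s (1/k) w) = f w" using fsc[OF w] 1 by simp
      also have "k * N (s (1/k) w + y) = N (s k (s (1/k) w + y))" using hom 1 by simp
      also have "s k (s (1/k) w + y) = w + s k y" using 1 by (simp add: vs.scale_right_distrib)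
      finally show ?thesis using gv vw by simp
    next
      case 2
      define m where "m = - k"
      have m: "m > 0" using 2 m_def by simp
      have w': "s (1/m) w \<in> W" by (rule vs.subspace_scale[OF W w])
      have "f (s (1/m) w) - N (s (1/m) w - y) \<le> c" using c1 w' by blast
      then have "m * f (s (1/m) w) - m * N (s (1/m) w - y) \<le> m * c"
        using m by (simp add: right_diff_distrib[symmetric])
      also have "m * f (s (1/m) w) = f w" using fsc[OF w] m by simp
      also have "m * N (s (1/m) w - y) = N (s m (s (1/m) w - y))" using hom m by simp
      also have "s m (s (1/m) w - y) = w + s k y" using m m_def by (simp add: vs.scale_right_diff_distrib)
      finally show ?thesis using gv vw m_def by simp
    next
      case 3
      then show ?thesis using gv vw fN w by simp
    qed
  qed
  show ?thesis using lin gW gy bound by blast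
qed

lemma vs_self: "vector_space ((*) :: 'a::field \<Rightarrow> 'a \<Rightarrow> 'a)"
  by unfold_locales (simp_all add: algebra_simps)

lemma hb_real:
  fixes s :: "real \<Rightarrow> 'v::ab_group_add \<Rightarrow> 'v" and N :: "'v \<Rightarrow> real"
  assumes vs: "vector_space s" and tri: "\<And>x y. N (x + y) \<le> N x + N y"
    and hom: "\<And>c x. N (s c x) = \<bar>c\<bar> * N x"
    and F: "finite F" and spF: "module.span s F = UNIV"
  shows "\<exists>g. Vector_Spaces.linear s (*) g \<and> g x0 = N x0 \<and> (\<forall>x. \<bar>g x\<bar> \<le> N x)"
proof -
  interpret vs: vector_space s by (rule vs)
  have Nneg: "N v \<ge> 0" for v
  proof -
    have "N 0 = 0" using hom[of 0 0] by simp
    moreover have "N (v + (-v)) \<le> N v + N (- v)" by (rule tri)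
    moreover have "N (- v) = N v" using hom[of "-1" v] by simp
    ultimately show ?thesis by simp
  qed
  have claim: "\<exists>g. lin_on s (vs.span (insert x0 G)) g \<and> g x0 = N x0 \<and> (\<forall>v\<in>vs.span (insert x0 G). g v \<le> N v)"
    if "finite G" for G
    using that
  proof (induction G rule: finite_induct)
    case empty
    show ?case
    proof (cases "x0 = 0")
      case True
      have "vs.span (insert x0 {}) = {0}" using True by simp
      then show ?thesis using True Nneg hom[of 0 0]
        by (intro exI[of _ "\<lambda>_. 0"]) (auto simp: lin_on_def)
    next
      case False
      have W: "vs.subspace {0}" by simp
      have "\<exists>g. lin_on s (vs.span (insert x0 {0})) g \<and> (\<forall>w\<in>{0}. g w = (\<lambda>_. 0) w) \<and> g x0 = N x0
           \<and> (\<forall>v\<in>vs.span (insert x0 {0}). g v \<le> N v)"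
        by (rule hb_ext[OF vs tri hom W]) (use False Nneg hom[of 0 0] hom[of "-1" x0] in \<open>auto simp: lin_on_def\<close>)
      moreover have "vs.span (insert x0 {0}) = vs.span (insert x0 {})"
        by (metis insert_commute vs.span_insert_0)
      ultimately show ?thesis by auto
    qed
  next
    case (insert y G)
    from insert.IH obtain g0 where g0: "lin_on s (vs.span (insert x0 G)) g0" and gx: "g0 x0 = N x0"
      and gb: "\<forall>v\<in>vs.span (insert x0 G). g0 v \<le> N v" by blast
    define W where "W = vs.span (insert x0 G)"
    have spe: "vs.span (insert x0 (insert y G)) = vs.span (insert y W)"
    proof -
      have "vs.span (insert y W) = {x. \<exists>k. x - s k y \<in> vs.span W}" by (rule vs.span_insert)
      also have "\<dots> = {x. \<exists>k. x - s k y \<in> vs.span (insert x0 G)}" unfolding W_def vs.span_span ..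
      also have "\<dots> = vs.span (insert y (insert x0 G))" by (rule vs.span_insert[symmetric])
      finally show ?thesis by (simp add: insert_commute)
    qed
    have x0W: "x0 \<in> W" unfolding W_def by (simp add: vs.span_base)
    show ?case
    proof (cases "y \<in> W")
      case True
      then have "vs.span (insert y W) = W" unfolding W_def by (simp add: vs.span_redundant vs.span_span)
      then show ?thesis using g0 gx gb spe W_def by auto
    next
      case False
      have Wsub: "vs.subspace W" unfolding W_def by simp
      have W0: "0 \<in> W" using vs.subspace_0[OF Wsub] .
      have g0add: "g0 (a + b) = g0 a + g0 b" if "a \<in> W" "b \<in> W" for a b using g0 that unfolding lin_on_def W_def by blast
      have g00: "g0 0 = 0" using g0 W0 unfolding lin_on_def W_def by (metis vs.scale_zero_left mult_zero_left)
      have key: "g0 w1 - N (w1 - y) \<le> N (w2 + y) - g0 w2" if "w1 \<in> W" "w2 \<in> W" for w1 w2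
      proof -
        have "g0 w1 + g0 w2 = g0 (w1 + w2)" using g0add that by simp
        also have "\<dots> \<le> N (w1 + w2)" using gb vs.subspace_add[OF Wsub that] W_def by auto
        also have "w1 + w2 = (w1 - y) + (w2 + y)" by simp
        also have "N \<dots> \<le> N (w1 - y) + N (w2 + y)" by (rule tri)
        finally show ?thesis by simp
      qed
      define c where "c = Inf ((\<lambda>w. N (w + y) - g0 w) ` W)"
      have bdd: "bdd_below ((\<lambda>w. N (w + y) - g0 w) ` W)"
      proof (rule bdd_belowI[of _ "g0 0 - N (0 - y)"])
        fix x assume "x \<in> (\<lambda>w. N (w + y) - g0 w) ` W"
        then obtain w where "w \<in> W" "x = N (w + y) - g0 w" by blast
        then show "g0 0 - N (0 - y) \<le> x" using key[OF W0] by blast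
      qed
      have c1: "\<forall>w\<in>W. g0 w - N (w - y) \<le> c"
        unfolding c_def by (intro ballI cInf_greatest) (use key W0 in auto)
      have c2: "\<forall>w\<in>W. c \<le> N (w + y) - g0 w"
        unfolding c_def using bdd by (auto intro: cInf_lower)
      have fN: "\<forall>w\<in>W. g0 w \<le> N w" using gb W_def by auto
      obtain g where g: "lin_on s (vs.span (insert y W)) g" and gW: "\<forall>w\<in>W. g w = g0 w"
        and gbd: "\<forall>v\<in>vs.span (insert y W). g v \<le> N v"
        using hb_ext[OF vs tri hom Wsub False g0[folded W_def] fN c1 c2] by blast
      show ?thesis using g gW gbd gx x0W spe by (intro exI[of _ g]) auto
    qed
  qed
  obtain g where g: "lin_on s (vs.span (insert x0 F)) g" and gx: "g x0 = N x0"
    and gb: "\<forall>v\<in>vs.span (insert x0 F). g v \<le> N v" using claim[OF F] by blast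
  have U: "vs.span (insert x0 F) = UNIV" using vs.span_mono[of F "insert x0 F"] spF by auto
  have lin: "Vector_Spaces.linear s (*) g"
    unfolding Vector_Spaces.linear_iff using vs vs_self g U by (auto simp: lin_on_def)
  have "\<bar>g x\<bar> \<le> N x" for x
  proof -
    have "g x \<le> N x" using gb U by auto
    moreover have "g (s (-1) x) \<le> N (s (-1) x)" using gb U by auto
    moreover have "g (s (-1) x) = - g x" using g U unfolding lin_on_def by (metis UNIV_I mult_minus1)
    moreover have "N (s (-1) x) = N x" using hom[of "-1" x] by (simp only: abs_neg_one mult_1)
    ultimately show ?thesis by linarith
  qed
  then show ?thesis using lin gx by blast
qed

lemma norming_real:
  fixes s :: "real \<Rightarrow> 'v::ab_group_add \<Rightarrow> 'v"
  assumes "normed_sp s N" "has_dim s n"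
  shows "\<exists>\<psi>\<in>dual_ball s N. N x \<le> norm (\<psi> x)"
proof -
  have vs: "vector_space s" and hom: "\<And>c x. N (s c x) = \<bar>c\<bar> * N x" and tri: "\<And>x y. N (x + y) \<le> N x + N y"
    using assms(1) unfolding normed_sp_def by auto
  obtain F where F: "finite F" "module.span s F = UNIV" using assms(2) unfolding has_dim_def by auto
  obtain g where g: "Vector_Spaces.linear s (*) g" "g x = N x" "\<forall>x. \<bar>g x\<bar> \<le> N x"
    using hb_real[OF vs tri hom F] by blast
  then show ?thesis unfolding dual_ball_def by (intro bexI[of _ g]) auto
qed

lemma norming_complex:
  fixes s :: "complex \<Rightarrow> 'v::ab_group_add \<Rightarrow> 'v"
  assumes "normed_sp s N" "has_dim s n"
  shows "\<exists>\<psi>\<in>dual_ball s N. N x0 \<le> norm (\<psi> x0)"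
proof -
  have vs: "vector_space s" and hom: "\<And>c x. N (s c x) = norm c * N x" and tri: "\<And>x y. N (x + y) \<le> N x + N y"
    using assms(1) unfolding normed_sp_def by auto
  interpret vs: vector_space s by (rule vs)
  obtain F where F: "finite F" "vs.span F = UNIV" using assms(2) unfolding has_dim_def by auto
  define sr where "sr r x = s (complex_of_real r) x" for r x
  have vsr: "vector_space sr"
    by unfold_locales (simp_all add: sr_def vs.scale_right_distrib vs.scale_left_distrib)
  interpret vr: vector_space sr by (rule vsr)
  have homr: "N (sr c x) = \<bar>c\<bar> * N x" for c x using hom by (simp add: sr_def)
  have decomp: "s c v = sr (Re c) v + sr (Im c) (s \<i> v)" for c v
  proof -
    have "sr (Re c) v + sr (Im c) (s \<i> v) = s (complex_of_real (Re c) + complex_of_real (Im c) * \<i>) v"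
      by (simp add: sr_def vs.scale_left_distrib)
    also have "complex_of_real (Re c) + complex_of_real (Im c) * \<i> = c" by (simp add: complex_eq_iff)
    finally show ?thesis by simp
  qed
  define F' where "F' = F \<union> (s \<i>) ` F"
  have F': "finite F'" using F unfolding F'_def by simp
  have spF': "vr.span F' = UNIV"
  proof -
    have "x \<in> vr.span F'" for x
    proof -
      have "x \<in> vs.span F" using F by simp
      then obtain u where x: "x = (\<Sum>v\<in>F. s (u v) v)" using vs.span_finite[OF F(1)] by auto
      have "s (u v) v \<in> vr.span F'" if "v \<in> F" for v
        unfolding decomp[of "u v" v] using that
        by (intro vr.span_add vr.span_scale vr.span_base) (auto simp: F'_def)
      then show ?thesis unfolding x by (intro vr.span_sum) auto
    qed
    then show ?thesis by auto
  qed
  obtain g where glin: "Vector_Spaces.linear sr (*) g" and gx: "g x0 = N x0" and gb: "\<forall>x. \<bar>g x\<bar> \<le> N x"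
    using hb_real[OF vsr tri homr F' spF'] by blast
  have gadd: "g (a + b) = g a + g b" and gsr: "g (sr r a) = r * g a" for a b r
    using glin unfolding Vector_Spaces.linear_iff by auto
  have gsc: "g (s c x) = Re c * g x + Im c * g (s \<i> x)" for c x
    unfolding decomp[of c x] gadd gsr ..
  define \<phi> where "\<phi> x = complex_of_real (g x) - \<i> * complex_of_real (g (s \<i> x))" for x
  have Re\<phi>: "Re (\<phi> x) = g x" for x by (simp add: \<phi>_def)
  have \<phi>add: "\<phi> (a + b) = \<phi> a + \<phi> b" for a b
    by (simp add: \<phi>_def gadd vs.scale_right_distrib algebra_simps)
  have \<phi>sc: "\<phi> (s c x) = c * \<phi> x" for c x
  proof -
    have A: "g (s c x) = Re c * g x + Im c * g (s \<i> x)" by (rule gsc)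
    have "g (s \<i> (s c x)) = g (s (\<i> * c) x)" by simp
    also have "\<dots> = - Im c * g x + Re c * g (s \<i> x)" unfolding gsc[of "\<i> * c" x] by simp
    finally have B: "g (s \<i> (s c x)) = - Im c * g x + Re c * g (s \<i> x)" .
    show ?thesis unfolding \<phi>_def A B by (simp add: complex_eq_iff algebra_simps)
  qed
  have lin: "Vector_Spaces.linear s (*) \<phi>"
    unfolding Vector_Spaces.linear_iff using vs vs_self \<phi>add \<phi>sc by auto
  have Nneg: "N v \<ge> 0" for v using gb[rule_format, of v] by linarith
  have bnd: "norm (\<phi> x) \<le> N x" for x
  proof (cases "\<phi> x = 0")
    case True then show ?thesis using Nneg by simp
  next
    case False
    define u where "u = cnj (\<phi> x) / complex_of_real (cmod (\<phi> x))"
    have nu: "norm u = 1" using False by (simp add: u_def norm_divide)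
    have "\<phi> (s u x) = u * \<phi> x" by (rule \<phi>sc)
    also have "\<dots> = complex_of_real (cmod (\<phi> x))"
      using False by (simp add: u_def field_simps power2_eq_square flip: complex_norm_square)
    finally have "cmod (\<phi> x) = g (s u x)" using Re\<phi>[of "s u x"] by simp
    also have "\<dots> \<le> N (s u x)" using gb by (metis abs_ge_self order_trans)
    also have "\<dots> = N x" using hom nu by simp
    finally show ?thesis .
  qed
  have "N x0 \<le> norm (\<phi> x0)" using Re\<phi>[of x0] gx abs_Re_le_cmod[of "\<phi> x0"] by simp
  then show ?thesis unfolding dual_ball_def using lin bnd by blast
qed

lemma emb_sum:
  assumes "\<And>a b. emb (a + b) = emb a + emb b" "emb 0 = 0"
  shows "emb (sum f A) = (\<Sum>a\<in>A. emb (f a))"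
  by (induction A rule: infinite_finite_induct) (simp_all add: assms)

lemma core:
  fixes s :: "'k::real_normed_field \<Rightarrow> 'v::ab_group_add \<Rightarrow> 'v" and emb :: "'k \<Rightarrow> complex"
    and x :: "nat \<Rightarrow> 'v" and lam :: "nat \<Rightarrow> real" and M :: nat
  assumes ns: "normed_sp s N" and hd: "has_dim s n"
    and emul: "\<And>a b. emb (a * b) = emb a * emb b" and eadd: "\<And>a b. emb (a + b) = emb a + emb b"
    and enorm: "\<And>a. norm (emb a) = norm a" and e0: "emb 0 = 0"
    and norming: "\<And>y. \<exists>\<psi>\<in>dual_ball s N. N y \<le> norm (\<psi> y)"
    and S: "S \<ge> 0" and Sq: "\<forall>\<phi>\<in>dual_ball s N. (\<Sum>l\<in>{1..M}. (lam l * norm (\<phi> (x l)))\<^sup>2) \<le> S"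
  shows "(\<Sum>k\<in>{1..M}. (lam k * N (x k))\<^sup>2) \<le> real n * S"
proof -
  have vs: "vector_space s" and Nneg: "\<And>y. N y \<ge> 0"
  proof -
    show vs: "vector_space s" using ns unfolding normed_sp_def by auto
    fix y
    obtain \<psi> where "\<psi> \<in> dual_ball s N" "N y \<le> norm (\<psi> y)" using norming by blast
    then have "norm (\<psi> y) \<le> N y" unfolding dual_ball_def by auto
    then show "N y \<ge> 0" using norm_ge_zero order_trans by blast
  qed
  interpret vs: vector_space s by (rule vs)
  obtain F where F: "finite F" "vs.span F = UNIV" and dimn: "vs.dim UNIV = n"
    using hd unfolding has_dim_def by blast
  obtain B where Bi: "vs.independent B" and BU: "UNIV \<subseteq> vs.span B" and Bc: "card B = vs.dim UNIV"
    by (rule vs.basis_exists[of UNIV])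
  have Bf: "finite B" using vs.independent_span_bound[OF F(1) Bi] F(2) by auto
  have Bn: "card B = n" using Bc dimn by simp
  define rep where "rep y b = vs.representation B y b" for y b
  have yrep: "(\<Sum>b\<in>B. s (rep y b) b) = y" for y
    unfolding rep_def using Bi BU Bf by (intro vs.sum_representation_eq) auto
  have linrep: "\<phi> y = (\<Sum>b\<in>B. rep y b * \<phi> b)" if "\<phi> \<in> dual_ball s N" for \<phi> y
  proof -
    have mh: "module_hom s (*) \<phi>" using that unfolding dual_ball_def by (simp add: module_hom_iff_linear)
    have "\<phi> y = \<phi> (\<Sum>b\<in>B. s (rep y b) b)" using yrep by simp
    also have "\<dots> = (\<Sum>b\<in>B. rep y b * \<phi> b)" by (simp add: module_hom.sum[OF mh] module_hom.scale[OF mh])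
    finally show ?thesis .
  qed
  obtain \<psi> where \<psi>: "\<And>y. \<psi> y \<in> dual_ball s N \<and> N y \<le> norm (\<psi> y y)" using norming by metis
  define a where "a k b = emb (\<psi> (x k) b)" for k b
  define V where "V b l = complex_of_real (lam l) * emb (rep (x l) b)" for b l
  have R: "(\<Sum>b\<in>B. a k b * V b l) = complex_of_real (lam l) * emb (\<psi> (x k) (x l))" for k l
  proof -
    have "emb (\<psi> (x k) (x l)) = (\<Sum>b\<in>B. emb (rep (x l) b) * emb (\<psi> (x k) b))"
      unfolding linrep[OF \<psi>[of "x k", THEN conjunct1], of "x l"] emb_sum[OF eadd e0] emul ..
    then show ?thesis unfolding a_def V_def by (simp add: sum_distrib_left algebra_simps)
  qed
  have Rn: "(cmod (\<Sum>b\<in>B. a k b * V b l))\<^sup>2 = (lam l * norm (\<psi> (x k) (x l)))\<^sup>2" for k l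
    unfolding R norm_mult enorm by (simp add: power_mult_distrib)
  have rows: "\<forall>k\<in>{1..M}. (\<Sum>l\<in>{1..M}. (cmod (\<Sum>b\<in>B. a k b * V b l))\<^sup>2) \<le> S"
    using Sq \<psi> unfolding Rn by blast
  have "(\<Sum>k\<in>{1..M}. (cmod (\<Sum>b\<in>B. a k b * V b k))\<^sup>2) \<le> real (card B) * S"
    by (rule key_c[OF Bf S rows])
  moreover have "(\<Sum>k\<in>{1..M}. (lam k * N (x k))\<^sup>2) \<le> (\<Sum>k\<in>{1..M}. (cmod (\<Sum>b\<in>B. a k b * V b k))\<^sup>2)"
  proof (rule sum_mono)
    fix k
    have "(lam k * N (x k))\<^sup>2 = (\<bar>lam k\<bar> * N (x k))\<^sup>2" by (simp add: power_mult_distrib)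
    also have "\<dots> \<le> (\<bar>lam k\<bar> * norm (\<psi> (x k) (x k)))\<^sup>2"
      using \<psi>[of "x k"] Nneg[of "x k"] by (intro power_mono mult_left_mono) auto
    also have "\<dots> = (cmod (\<Sum>b\<in>B. a k b * V b k))\<^sup>2" unfolding Rn by (simp add: power_mult_distrib)
    finally show "(lam k * N (x k))\<^sup>2 \<le> (cmod (\<Sum>b\<in>B. a k b * V b k))\<^sup>2" .
  qed
  ultimately show ?thesis using Bn by simp
qed

lemma hlp1:
  fixes N p :: real assumes "0 \<le> N" "0 < p"
  shows "(N powr ((p-2)/2) * N)\<^sup>2 = N powr p"
proof (cases "N = 0")
  case True then show ?thesis using assms by simp
next
  case False
  then have Np: "N > 0" using assms by simp
  have "N powr ((p-2)/2) * N = N powr ((p-2)/2) * N powr 1" using Np by simp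
  also have "\<dots> = N powr ((p-2)/2 + 1)" by (simp only: powr_add)
  also have "\<dots> = N powr (p/2)" by (rule arg_cong[where f="\<lambda>e. N powr e"]) (simp add: field_simps)
  finally have "(N powr ((p-2)/2) * N)\<^sup>2 = N powr (p/2) * N powr (p/2)" by (simp add: power2_eq_square)
  also have "\<dots> = N powr p" by (simp add: powr_add[symmetric])
  finally show ?thesis .
qed

lemma hlp2:
  fixes N p t :: real assumes "0 \<le> N"
  shows "(N powr ((p-2)/2) * t)\<^sup>2 = N powr (p-2) * t\<^sup>2"
proof (cases "N = 0")
  case True then show ?thesis by simp
next
  case False
  have "(N powr ((p-2)/2))\<^sup>2 = N powr ((p-2)/2) * N powr ((p-2)/2)" by (simp add: power2_eq_square)
  also have "\<dots> = N powr (p-2)" by (simp add: powr_add[symmetric])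
  finally show ?thesis by (simp add: power_mult_distrib)
qed

lemma hlp3:
  fixes N p t :: real assumes "0 \<le> t" "t \<le> N" "0 < p" "p \<le> 2"
  shows "N powr (p-2) * t\<^sup>2 \<le> t powr p"
proof (cases "t = 0")
  case True then show ?thesis by simp
next
  case False
  then have tp: "t > 0" and Np: "N > 0" using assms by auto
  have "t\<^sup>2 = t powr 2" using tp by simp
  also have "\<dots> = t powr p * t powr (2 - p)" by (simp add: powr_add[symmetric])
  also have "\<dots> \<le> t powr p * N powr (2 - p)"
    using assms by (intro mult_left_mono powr_mono2) auto
  finally have "N powr (p-2) * t\<^sup>2 \<le> N powr (p-2) * (t powr p * N powr (2 - p))"
    by (intro mult_left_mono) auto
  also have "\<dots> = t powr p * (N powr (p-2) * N powr (2-p))" by simp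
  also have "N powr (p-2) * N powr (2-p) = 1" using Np by (simp add: powr_add[symmetric])
  finally show ?thesis by simp
qed

lemma hlp4:
  fixes N t :: "nat \<Rightarrow> real" and p A T :: real and I :: "nat set"
  assumes I: "finite I" and p: "p > 2" and A: "A > 0" "A = (\<Sum>l\<in>I. N l powr p)"
    and T: "T > 0" "(\<Sum>l\<in>I. t l powr p) \<le> T powr p"
    and N0: "\<And>l. 0 \<le> N l" and t0: "\<And>l. 0 \<le> t l"
  shows "(\<Sum>l\<in>I. N l powr (p-2) * (t l)\<^sup>2) \<le> A powr (1 - 2/p) * T\<^sup>2"
proof -
  define P where "P = p / (p - 2)"
  define Q where "Q = p / 2"
  have P1: "P > 1" using p unfolding P_def by (simp add: field_simps)
  have Q1: "Q > 1" using p unfolding Q_def by simp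
  have PQ: "1/P + 1/Q = 1" using p unfolding P_def Q_def by (simp add: field_simps)
  define K where "K = A powr (1 - 2/p)"
  have Kp: "K > 0" using A unfolding K_def by simp
  have KP: "K powr P = A" unfolding K_def P_def powr_powr using p A by (simp add: field_simps)
  have T2: "T\<^sup>2 > 0" using T by simp
  have ab: "(N l powr (p-2) / K) * ((t l)\<^sup>2 / T\<^sup>2) \<le> (N l powr p / A) / P + (t l powr p / T powr p) / Q" for l
  proof -
    have "(N l powr (p-2) / K) * ((t l)\<^sup>2 / T\<^sup>2) \<le> (N l powr (p-2) / K) powr P / P + ((t l)\<^sup>2 / T\<^sup>2) powr Q / Q"
      by (rule Youngs_inequality[OF P1 Q1 PQ]) (use Kp T2 in auto)
    also have "(N l powr (p-2) / K) powr P = N l powr p / A"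
    proof -
      have e: "(p-2) * P = p" using p by (simp add: P_def)
      show ?thesis unfolding powr_divide KP powr_powr e ..
    qed
    also have "((t l)\<^sup>2 / T\<^sup>2) powr Q = t l powr p / T powr p"
    proof -
      have a: "((t l)\<^sup>2) powr Q = t l powr p"
      proof -
        have "(t l)\<^sup>2 = t l powr 2" using t0[of l] by (simp add: powr_numeral)
        then show ?thesis by (simp add: powr_powr Q_def)
      qed
      have b: "(T\<^sup>2) powr Q = T powr p"
      proof -
        have "T\<^sup>2 = T powr 2" using T by simp
        then show ?thesis by (simp add: powr_powr Q_def)
      qed
      show ?thesis unfolding powr_divide a b ..
    qed
    finally show ?thesis .
  qed
  have "(\<Sum>l\<in>I. (N l powr (p-2) / K) * ((t l)\<^sup>2 / T\<^sup>2))
      \<le> (\<Sum>l\<in>I. (N l powr p / A) / P + (t l powr p / T powr p) / Q)"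
    by (rule sum_mono) (rule ab)
  also have "\<dots> = (\<Sum>l\<in>I. N l powr p) / A / P + (\<Sum>l\<in>I. t l powr p) / T powr p / Q"
    by (simp add: sum.distrib sum_divide_distrib)
  also have "(\<Sum>l\<in>I. N l powr p) / A = 1" using A by simp
  also have "(\<Sum>l\<in>I. t l powr p) / T powr p / Q \<le> 1 / Q"
  proof -
    have "(\<Sum>l\<in>I. t l powr p) / T powr p \<le> 1" using T by (simp add: divide_le_eq)
    then show ?thesis using Q1 by (intro divide_right_mono) auto
  qed
  finally have "(\<Sum>l\<in>I. (N l powr (p-2) / K) * ((t l)\<^sup>2 / T\<^sup>2)) \<le> 1"
    using PQ by linarith
  moreover have "(\<Sum>l\<in>I. (N l powr (p-2) / K) * ((t l)\<^sup>2 / T\<^sup>2)) = (\<Sum>l\<in>I. N l powr (p-2) * (t l)\<^sup>2) / (K * T\<^sup>2)"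
    by (simp add: sum_divide_distrib)
  ultimately show ?thesis using Kp T2 by (simp add: K_def divide_le_eq)
qed

lemma main_generic:
  fixes s :: "'k::real_normed_field \<Rightarrow> 'v::ab_group_add \<Rightarrow> 'v" and emb :: "'k \<Rightarrow> complex"
  assumes ns: "normed_sp s N" and hd: "has_dim s n"
    and emul: "\<And>a b. emb (a * b) = emb a * emb b" and eadd: "\<And>a b. emb (a + b) = emb a + emb b"
    and enorm: "\<And>a. norm (emb a) = norm a" and e0: "emb 0 = 0"
    and norming: "\<And>y. \<exists>\<psi>\<in>dual_ball s N. N y \<le> norm (\<psi> y)"
    and p: "0 < p"
  shows "pi_summing p s N N id \<le> real n powr max (1/p) (1/2)"
proof -
  have vs: "vector_space s" using ns unfolding normed_sp_def by auto
  have Nneg: "N y \<ge> 0" for y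
  proof -
    obtain \<psi> where "\<psi> \<in> dual_ball s N" "N y \<le> norm (\<psi> y)" using norming by blast
    then have "norm (\<psi> y) \<le> N y" unfolding dual_ball_def by auto
    then show "N y \<ge> 0" using norm_ge_zero order_trans by blast
  qed
  have zdb: "(\<lambda>_. 0) \<in> dual_ball s N"
    unfolding dual_ball_def Vector_Spaces.linear_iff using vs vs_self Nneg by auto
  have dbn: "norm (\<phi> y) \<le> N y" if "\<phi> \<in> dual_ball s N" for \<phi> y using that unfolding dual_ball_def by auto
  define C where "C = real n powr max (1/p) (1/2)"
  have C0: "C \<ge> 0" unfolding C_def by simp
  have bound: "(\<Sum>k\<in>{1..M}. N (id (x k)) powr p) powr (1/p)
      \<le> C * (SUP \<phi>\<in>dual_ball s N. (\<Sum>k\<in>{1..M}. norm (\<phi> (x k)) powr p) powr (1/p))" for M :: nat and x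
  proof -
    define D where "D = dual_ball s N"
    define f where "f \<phi> = (\<Sum>k\<in>{1..M}. norm (\<phi> (x k)) powr p) powr (1/p)" for \<phi> :: "'v \<Rightarrow> 'k"
    define T where "T = (SUP \<phi>\<in>D. f \<phi>)"
    define A where "A = (\<Sum>k\<in>{1..M}. N (x k) powr p)"
    have A0: "A \<ge> 0" unfolding A_def by (simp add: sum_nonneg)
    have fle: "f \<phi> \<le> A powr (1/p)" if "\<phi> \<in> D" for \<phi>
      unfolding f_def A_def
    proof (rule powr_mono2)
      show "(\<Sum>k\<in>{1..M}. norm (\<phi> (x k)) powr p) \<le> (\<Sum>k\<in>{1..M}. N (x k) powr p)"
        using that dbn p unfolding D_def by (intro sum_mono powr_mono2) auto
    qed (use p in \<open>auto simp: sum_nonneg\<close>)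
    have bdd: "bdd_above (f ` D)" using fle by (intro bdd_aboveI2) auto
    have Tup: "f \<phi> \<le> T" if "\<phi> \<in> D" for \<phi> unfolding T_def by (rule cSUP_upper[OF that bdd])
    have T0: "0 \<le> T" using Tup[of "\<lambda>_. 0"] zdb unfolding D_def f_def by (meson order_trans powr_ge_zero)
    have Y: "(\<Sum>k\<in>{1..M}. norm (\<phi> (x k)) powr p) \<le> T powr p" if "\<phi> \<in> D" for \<phi>
    proof -
      define Z where "Z = (\<Sum>k\<in>{1..M}. norm (\<phi> (x k)) powr p)"
      have Z0: "Z \<ge> 0" unfolding Z_def by (simp add: sum_nonneg)
      have "f \<phi> powr p = Z powr (1/p * p)" unfolding f_def Z_def[symmetric] powr_powr ..
      also have "\<dots> = Z" using p Z0 by simp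
      finally have "Z = f \<phi> powr p" by simp
      also have "\<dots> \<le> T powr p" using Tup[OF that] p unfolding f_def by (intro powr_mono2) auto
      finally show ?thesis unfolding Z_def .
    qed
    define lam where "lam l = N (x l) powr ((p-2)/2)" for l
    have lamN: "(\<Sum>k\<in>{1..M}. (lam k * N (x k))\<^sup>2) = A"
      unfolding A_def lam_def using hlp1[OF Nneg p] by simp
    have lamphi: "(lam l * norm (\<phi> (x l)))\<^sup>2 = N (x l) powr (p-2) * (norm (\<phi> (x l)))\<^sup>2" for \<phi> l
      unfolding lam_def by (rule hlp2[OF Nneg])
    have main: "A powr (1/p) \<le> C * T"
    proof (cases "p \<le> 2")
      case True
      have "(\<Sum>k\<in>{1..M}. (lam k * N (x k))\<^sup>2) \<le> real n * T powr p"
      proof (rule core[OF ns hd emul eadd enorm e0 norming, where S="T powr p"])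
        show "T powr p \<ge> 0" by simp
        show "\<forall>\<phi>\<in>dual_ball s N. (\<Sum>l\<in>{1..M}. (lam l * norm (\<phi> (x l)))\<^sup>2) \<le> T powr p"
        proof
          fix \<phi> assume \<phi>: "\<phi> \<in> dual_ball s N"
          have "(\<Sum>l\<in>{1..M}. (lam l * norm (\<phi> (x l)))\<^sup>2) \<le> (\<Sum>l\<in>{1..M}. norm (\<phi> (x l)) powr p)"
            unfolding lamphi using dbn[OF \<phi>] p True by (intro sum_mono hlp3) auto
          also have "\<dots> \<le> T powr p" using Y \<phi> unfolding D_def by blast
          finally show "(\<Sum>l\<in>{1..M}. (lam l * norm (\<phi> (x l)))\<^sup>2) \<le> T powr p" .
        qed
      qed
      then have "A \<le> real n * T powr p" using lamN by simp
      then have "A powr (1/p) \<le> (real n * T powr p) powr (1/p)" using A0 p by (intro powr_mono2) auto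
      also have "\<dots> = real n powr (1/p) * T" using T0 p by (simp add: powr_mult powr_powr)
      also have "max (1/p) (1/2) = 1/p" using True p by (simp add: max_def field_simps)
      then have "real n powr (1/p) = C" unfolding C_def by simp
      finally show ?thesis .
    next
      case False
      then have p2: "p > 2" by simp
      define K where "K = A powr (1 - 2/p)"
      have K0: "K \<ge> 0" unfolding K_def by simp
      have "(\<Sum>k\<in>{1..M}. (lam k * N (x k))\<^sup>2) \<le> real n * (K * T\<^sup>2)"
      proof (rule core[OF ns hd emul eadd enorm e0 norming])
        show "K * T\<^sup>2 \<ge> 0" using K0 by simp
        show "\<forall>\<phi>\<in>dual_ball s N. (\<Sum>l\<in>{1..M}. (lam l * norm (\<phi> (x l)))\<^sup>2) \<le> K * T\<^sup>2"
        proof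
          fix \<phi> assume \<phi>: "\<phi> \<in> dual_ball s N"
          have "(\<Sum>l\<in>{1..M}. N (x l) powr (p-2) * (norm (\<phi> (x l)))\<^sup>2) \<le> K * T\<^sup>2"
          proof (cases "A = 0 \<or> T = 0")
            case True
            have z: "N (x l) powr (p-2) * (norm (\<phi> (x l)))\<^sup>2 = 0" if l: "l \<in> {1..M}" for l
            proof (cases "A = 0")
              case True
              then have "N (x l) powr p = 0"
                using sum_nonneg_eq_0_iff[of "{1..M}" "\<lambda>k. N (x k) powr p"] l unfolding A_def by auto
              then show ?thesis by simp
            next
              case False
              then have "T = 0" using True by simp
              then have "(\<Sum>k\<in>{1..M}. norm (\<phi> (x k)) powr p) \<le> 0" using Y[of \<phi>] \<phi> unfolding D_def by simp
              then have "(\<Sum>k\<in>{1..M}. norm (\<phi> (x k)) powr p) = 0" by (simp add: antisym sum_nonneg)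
              then have "norm (\<phi> (x l)) powr p = 0"
                using sum_nonneg_eq_0_iff[of "{1..M}" "\<lambda>k. norm (\<phi> (x k)) powr p"] l by auto
              then show ?thesis by simp
            qed
            have "(\<Sum>l\<in>{1..M}. N (x l) powr (p-2) * (norm (\<phi> (x l)))\<^sup>2) = 0"
              by (rule sum.neutral) (use z in blast)
            then show ?thesis using K0 by simp
          next
            case False
            then have Ap: "A > 0" and Tp: "T > 0" using A0 T0 by auto
            show ?thesis unfolding K_def
              by (rule hlp4[OF _ p2 Ap A_def Tp]) (use Y \<phi> Nneg in \<open>auto simp: D_def\<close>)
          qed
          then show "(\<Sum>l\<in>{1..M}. (lam l * norm (\<phi> (x l)))\<^sup>2) \<le> K * T\<^sup>2" unfolding lamphi .
        qed
      qed
      then have core2: "A \<le> real n * (K * T\<^sup>2)" using lamN by simp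
      show ?thesis
      proof (cases "A = 0")
        case True then show ?thesis using C0 T0 by simp
      next
        case False
        then have Ap: "A > 0" using A0 by simp
        have Kp: "K > 0" using Ap unfolding K_def by simp
        have "A = A powr (2/p) * K" unfolding K_def using Ap by (simp add: powr_add[symmetric])
        then have "A powr (2/p) * K \<le> (real n * T\<^sup>2) * K" using core2 by (simp add: algebra_simps)
        then have a2: "A powr (2/p) \<le> real n * T\<^sup>2" using Kp by simp
        have "A powr (1/p) = (A powr (2/p)) powr (1/2)" by (simp add: powr_powr)
        also have "\<dots> \<le> (real n * T\<^sup>2) powr (1/2)" by (rule powr_mono2) (use a2 in auto)
        also have "\<dots> = sqrt (real n) * T" using T0 by (simp add: powr_half_sqrt real_sqrt_mult)
        also have "max (1/p) (1/2) = 1/2" using p2 by (simp add: max_def field_simps)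
        then have "sqrt (real n) = C" unfolding C_def by (simp add: powr_half_sqrt)
        finally show ?thesis .
      qed
    qed
    show ?thesis using main unfolding A_def T_def D_def f_def by simp
  qed
  show ?thesis unfolding pi_summing_def C_def[symmetric]
    apply (rule cInf_lower)
    subgoal using C0 bound by blast
    subgoal by (rule bdd_belowI[of _ 0]) auto
    done
qed

theorem mainTheorem1:
  fixes p :: real and n :: nat
    and sR :: "real \<Rightarrow> 'a::ab_group_add \<Rightarrow> 'a" and NR :: "'a \<Rightarrow> real"
    and sC :: "complex \<Rightarrow> 'b::ab_group_add \<Rightarrow> 'b" and NC :: "'b \<Rightarrow> real"
  assumes "0 < p"
  shows "(normed_sp sR NR \<and> has_dim sR n \<longrightarrow>
            pi_summing p sR NR NR id \<le> real n powr max (1/p) (1/2))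
       \<and> (normed_sp sC NC \<and> has_dim sC n \<longrightarrow>
            pi_summing p sC NC NC id \<le> real n powr max (1/p) (1/2))"
proof (intro conjI impI)
  assume h: "normed_sp sR NR \<and> has_dim sR n"
  show "pi_summing p sR NR NR id \<le> real n powr max (1/p) (1/2)"
    by (rule main_generic[where emb = complex_of_real])
       (use h assms norming_real[of sR NR n] in auto)
next
  assume h: "normed_sp sC NC \<and> has_dim sC n"
  show "pi_summing p sC NC NC id \<le> real n powr max (1/p) (1/2)"
    by (rule main_generic[where emb = id])
       (use h assms norming_complex[of sC NC n] in auto)
qed

end
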